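(* Let $G$ be a finite group, $S$ a subset of $G$, and $\sigma,\tau$ the inner automorphisms of $G$ induced by elements $\tilde\sigma,\tilde\tau\in G$ (i.e. $\sigma(x)=\tilde\sigma x\tilde\sigma^{-1}$, $\tau(x)=\tilde\tau x\tilde\tau^{-1}$). Suppose $G$ is a subgroup of a group $\mathcal G$ and there is $g\in\mathcal G$ with $g\tilde\sigma g^{-1}=\tilde\tau$, $gSg^{-1}=S$ and $gGg^{-1}=G$. Then $C(G,S)^\sigma\cong C(G,S)^\tau$ and $C_\Sigma(G,S)^\sigma\cong C_\Sigma(G,S)^\tau$. In particular, if $\tilde\sigma,\tilde\tau\in\mathfrak S_n$ lie in the same conjugacy class and $\sigma,\tau$ are the corresponding inner automorphisms of $\mathfrak S_n$, then for any subset $S$ of $\mathfrak S_n$ there is $g\in\mathfrak S_n$ such that, with $S'=\bigcup_{i}g^iSg^{-i}$, the graphs $C(\mathfrak S_n,S')^\sigma$ and $C(\mathfrak S_n,S')^\tau$ are isomorphic, and the graphs $C_\Sigma(\mathfrak S_n,S')^\sigma$ and $C_\Sigma(\mathfrak S_n,S')^\tau$ are isomorphic.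
   Context: For a group $G$, subset $S$ and automorphism $\sigma$, the twisted Cayley graph $C(G,S)^\sigma$ has vertex set $G$ and an edge from $x$ to $\sigma(xs)$ for each $s\in S$; the twisted Cayley sum graph $C_\Sigma(G,S)^\sigma$ has an edge from $x$ to $\sigma(x^{-1}s)$. *)

theory Defs
  imports "HOL-Algebra.Sym_Groups"
begin

text \<open>Since s maps injectively to
  sigma(x s), the graph has no multiple edges and is represented by its edge relation.\<close>
definition twisted_cayley :: "('a, 'b) monoid_scheme \<Rightarrow> 'a set \<Rightarrow> 'a set \<Rightarrow> ('a \<Rightarrow> 'a) \<Rightarrow> ('a \<times> 'a) set"
  where "twisted_cayley M G S \<sigma> = {(x, \<sigma> (x \<otimes>\<^bsub>M\<^esub> s)) | x s. x \<in> G \<and> s \<in> S}"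

definition twisted_cayley_sum :: "('a, 'b) monoid_scheme \<Rightarrow> 'a set \<Rightarrow> 'a set \<Rightarrow> ('a \<Rightarrow> 'a) \<Rightarrow> ('a \<times> 'a) set"
  where "twisted_cayley_sum M G S \<sigma> = {(x, \<sigma> (inv\<^bsub>M\<^esub> x \<otimes>\<^bsub>M\<^esub> s)) | x s. x \<in> G \<and> s \<in> S}"

definition digraph_iso :: "'a set \<Rightarrow> ('a \<times> 'a) set \<Rightarrow> 'c set \<Rightarrow> ('c \<times> 'c) set \<Rightarrow> bool"
  where "digraph_iso V E V' E' \<longleftrightarrow>
    (\<exists>f. bij_betw f V V' \<and> (\<forall>x\<in>V. \<forall>y\<in>V. (x, y) \<in> E \<longleftrightarrow> (f x, f y) \<in> E'))"

definition inner :: "('a, 'b) monoid_scheme \<Rightarrow> 'a \<Rightarrow> 'a \<Rightarrow> 'a"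
  where "inner M a = (\<lambda>x. a \<otimes>\<^bsub>M\<^esub> x \<otimes>\<^bsub>M\<^esub> inv\<^bsub>M\<^esub> a)"

end

theory Submission
  imports Defs
begin


lemma (in group) cancel_simps [simp]:
  "g \<in> carrier G \<Longrightarrow> z \<in> carrier G \<Longrightarrow> inv g \<otimes> (g \<otimes> z) = z"
  "g \<in> carrier G \<Longrightarrow> z \<in> carrier G \<Longrightarrow> g \<otimes> (inv g \<otimes> z) = z"
  by (simp_all add: m_assoc[symmetric])

lemma (in group) conj_mult:
  assumes "g \<in> carrier G" "x \<in> carrier G" "y \<in> carrier G"
  shows "g \<otimes> (x \<otimes> y) \<otimes> inv g = (g \<otimes> x \<otimes> inv g) \<otimes> (g \<otimes> y \<otimes> inv g)"
  using assms by (simp add: m_assoc)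

lemma (in group) conj_inv:
  assumes "g \<in> carrier G" "x \<in> carrier G"
  shows "g \<otimes> inv x \<otimes> inv g = inv (g \<otimes> x \<otimes> inv g)"
  using assms by (simp add: inv_mult_group m_assoc)

lemma (in group) conj_inner:
  assumes "g \<in> carrier G" "x \<in> carrier G" "sa \<in> carrier G"
  shows "g \<otimes> (sa \<otimes> x \<otimes> inv sa) \<otimes> inv g =
     (g \<otimes> sa \<otimes> inv g) \<otimes> (g \<otimes> x \<otimes> inv g) \<otimes> inv (g \<otimes> sa \<otimes> inv g)"
  using assms by (simp add: m_assoc inv_mult_group)

lemma (in group) part1:
  assumes sub: "subgroup H G" and SH: "S \<subseteq> H" and sa: "sa \<in> H"
    and g: "g \<in> carrier G" and gt: "g \<otimes> sa \<otimes> inv g = ta"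
    and fS: "(\<lambda>s. g \<otimes> s \<otimes> inv g) ` S = S"
    and fH: "(\<lambda>x. g \<otimes> x \<otimes> inv g) ` H = H"
  shows "digraph_iso H (twisted_cayley G H S (inner G sa)) H (twisted_cayley G H S (inner G ta))
       \<and> digraph_iso H (twisted_cayley_sum G H S (inner G sa)) H (twisted_cayley_sum G H S (inner G ta))"
proof -
  define f where "f = (\<lambda>x. g \<otimes> x \<otimes> inv g)"
  have Hc: "H \<subseteq> carrier G" using sub by (rule subgroup.subset)
  have sac: "sa \<in> carrier G" using sa Hc by blast
  have injc: "inj_on f (carrier G)" unfolding f_def inj_on_def using g by simp
  have inj: "inj_on f H" using injc Hc inj_on_subset by blast
  have bij: "bij_betw f H H" using inj fH unfolding f_def bij_betw_def by simp
  have fc: "f x \<in> carrier G" if "x \<in> carrier G" for x using that g unfolding f_def by simp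
  have fmult: "f (x \<otimes> y) = f x \<otimes> f y" if "x \<in> carrier G" "y \<in> carrier G" for x y
    unfolding f_def using conj_mult[OF g that] .
  have finv: "f (inv x) = inv (f x)" if "x \<in> carrier G" for x
    unfolding f_def using conj_inv[OF g that] .
  have finner: "f (inner G sa z) = inner G ta (f z)" if "z \<in> carrier G" for z
    unfolding f_def inner_def using conj_inner[OF g that sac] gt by simp
  have innerc: "inner G a z \<in> carrier G" if "a \<in> carrier G" "z \<in> carrier G" for a z
    using that unfolding inner_def by simp
  have Sc: "s \<in> carrier G" if "s \<in> S" for s using that SH Hc by blast
  have fSS: "f s \<in> S" if "s \<in> S" for s using that fS unfolding f_def by blast
  have invc: "inv x \<in> carrier G" if "x \<in> carrier G" for x using that by simp
  have A: "(x, y) \<in> twisted_cayley G H S (inner G sa) \<longleftrightarrow>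
           (f x, f y) \<in> twisted_cayley G H S (inner G ta)" if xH: "x \<in> H" and yH: "y \<in> H" for x y
  proof
    assume "(x, y) \<in> twisted_cayley G H S (inner G sa)"
    then obtain s where s: "s \<in> S" "y = inner G sa (x \<otimes> s)" unfolding twisted_cayley_def by blast
    have "f y = inner G ta (f x \<otimes> f s)"
      using s xH Hc Sc finner fmult by auto
    moreover have "f x \<in> H" using xH fH f_def by blast
    ultimately show "(f x, f y) \<in> twisted_cayley G H S (inner G ta)"
      unfolding twisted_cayley_def using fSS[OF s(1)] by blast
  next
    assume "(f x, f y) \<in> twisted_cayley G H S (inner G ta)"
    then obtain s' where s': "s' \<in> S" "f y = inner G ta (f x \<otimes> s')" unfolding twisted_cayley_def by blast
    obtain s where s: "s \<in> S" "s' = f s" using s' fS f_def by blast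
    have xc: "x \<in> carrier G" and yc: "y \<in> carrier G" using xH yH Hc by auto
    have "f y = f (inner G sa (x \<otimes> s))"
      using s s' xc Sc finner fmult by auto
    hence "y = inner G sa (x \<otimes> s)"
      using injc yc innerc[OF sac] xc Sc[OF s(1)] by (meson inj_onD m_closed)
    thus "(x, y) \<in> twisted_cayley G H S (inner G sa)"
      unfolding twisted_cayley_def using s xH by blast
  qed
  have B: "(x, y) \<in> twisted_cayley_sum G H S (inner G sa) \<longleftrightarrow>
           (f x, f y) \<in> twisted_cayley_sum G H S (inner G ta)" if xH: "x \<in> H" and yH: "y \<in> H" for x y
  proof
    assume "(x, y) \<in> twisted_cayley_sum G H S (inner G sa)"
    then obtain s where s: "s \<in> S" "y = inner G sa (inv x \<otimes> s)" unfolding twisted_cayley_sum_def by blast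
    have "f y = inner G ta (inv (f x) \<otimes> f s)"
      using s xH Hc Sc finner fmult finv by auto
    moreover have "f x \<in> H" using xH fH f_def by blast
    ultimately show "(f x, f y) \<in> twisted_cayley_sum G H S (inner G ta)"
      unfolding twisted_cayley_sum_def using fSS[OF s(1)] by blast
  next
    assume "(f x, f y) \<in> twisted_cayley_sum G H S (inner G ta)"
    then obtain s' where s': "s' \<in> S" "f y = inner G ta (inv (f x) \<otimes> s')" unfolding twisted_cayley_sum_def by blast
    obtain s where s: "s \<in> S" "s' = f s" using s' fS f_def by blast
    have xc: "x \<in> carrier G" and yc: "y \<in> carrier G" using xH yH Hc by auto
    have "f y = f (inner G sa (inv x \<otimes> s))"
      using s s' xc Sc finner fmult finv by auto
    hence "y = inner G sa (inv x \<otimes> s)"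
      using injc yc innerc[OF sac] xc Sc[OF s(1)] by (meson inj_onD m_closed inv_closed)
    thus "(x, y) \<in> twisted_cayley_sum G H S (inner G sa)"
      unfolding twisted_cayley_sum_def using s xH by blast
  qed
  show ?thesis unfolding digraph_iso_def using bij A B by blast
qed

lemma (in group) conj_pow_step:
  assumes h: "h \<in> carrier G" and s: "s \<in> carrier G"
  shows "h \<otimes> (h [^] (i::int) \<otimes> s \<otimes> inv (h [^] i)) \<otimes> inv h
         = h [^] (1 + i) \<otimes> s \<otimes> inv (h [^] (1 + i))"
proof -
  have "h [^] (1 + i) = h \<otimes> h [^] i" using int_pow_mult[OF h, of 1 i] h by simp
  thus ?thesis using h s by (simp add: inv_mult_group m_assoc)
qed

lemma (in group) orbit_closed:
  assumes h: "h \<in> carrier G" and S: "S \<subseteq> carrier G"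
  defines "S' \<equiv> (\<Union>i :: int. (\<lambda>s. h [^] i \<otimes> s \<otimes> inv (h [^] i)) ` S)"
  shows "S' \<subseteq> carrier G" "(\<lambda>s. h \<otimes> s \<otimes> inv h) ` S' = S'"
proof -
  show "S' \<subseteq> carrier G" unfolding S'_def using S h by auto
  show "(\<lambda>s. h \<otimes> s \<otimes> inv h) ` S' = S'"
  proof
    show "(\<lambda>s. h \<otimes> s \<otimes> inv h) ` S' \<subseteq> S'"
    proof
      fix y assume "y \<in> (\<lambda>s. h \<otimes> s \<otimes> inv h) ` S'"
      then obtain i s where s: "s \<in> S" and y: "y = h \<otimes> (h [^] (i::int) \<otimes> s \<otimes> inv (h [^] i)) \<otimes> inv h"
        unfolding S'_def by blast
      have "y = h [^] (1 + i) \<otimes> s \<otimes> inv (h [^] (1 + i))"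
        using y conj_pow_step[OF h, of s i] s S by auto
      thus "y \<in> S'" unfolding S'_def using s by blast
    qed
  next
    show "S' \<subseteq> (\<lambda>s. h \<otimes> s \<otimes> inv h) ` S'"
    proof
      fix y assume "y \<in> S'"
      then obtain i s where s: "s \<in> S" and y: "y = h [^] (i::int) \<otimes> s \<otimes> inv (h [^] i)"
        unfolding S'_def by blast
      have "y = h \<otimes> (h [^] (i - 1) \<otimes> s \<otimes> inv (h [^] (i - 1))) \<otimes> inv h"
        using y conj_pow_step[OF h, of s "i - 1"] s S by auto
      moreover have "h [^] (i - 1) \<otimes> s \<otimes> inv (h [^] (i - 1)) \<in> S'"
        unfolding S'_def using s by blast
      ultimately show "y \<in> (\<lambda>s. h \<otimes> s \<otimes> inv h) ` S'" by blast
    qed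
  qed
qed

theorem proposition4p3:
  shows "(\<forall>(\<G> :: ('a, 'b) monoid_scheme) G S sa ta g.
            group \<G> \<and> subgroup G \<G> \<and> finite G \<and> S \<subseteq> G \<and> sa \<in> G \<and> ta \<in> G \<and>
            g \<in> carrier \<G> \<and> g \<otimes>\<^bsub>\<G>\<^esub> sa \<otimes>\<^bsub>\<G>\<^esub> inv\<^bsub>\<G>\<^esub> g = ta \<and>
            (\<lambda>s. g \<otimes>\<^bsub>\<G>\<^esub> s \<otimes>\<^bsub>\<G>\<^esub> inv\<^bsub>\<G>\<^esub> g) ` S = S \<and>
            (\<lambda>x. g \<otimes>\<^bsub>\<G>\<^esub> x \<otimes>\<^bsub>\<G>\<^esub> inv\<^bsub>\<G>\<^esub> g) ` G = G
          \<longrightarrow> digraph_iso G (twisted_cayley \<G> G S (inner \<G> sa))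
                           G (twisted_cayley \<G> G S (inner \<G> ta))
            \<and> digraph_iso G (twisted_cayley_sum \<G> G S (inner \<G> sa))
                           G (twisted_cayley_sum \<G> G S (inner \<G> ta)))
       \<and> (\<forall>(n :: nat) sa ta S.
            sa \<in> carrier (sym_group n) \<and> ta \<in> carrier (sym_group n) \<and>
            (\<exists>h \<in> carrier (sym_group n).
               h \<otimes>\<^bsub>sym_group n\<^esub> sa \<otimes>\<^bsub>sym_group n\<^esub> inv\<^bsub>sym_group n\<^esub> h = ta) \<and>
            S \<subseteq> carrier (sym_group n)
          \<longrightarrow> (\<exists>g \<in> carrier (sym_group n).
                let S' = (\<Union>i :: int. (\<lambda>s. g [^]\<^bsub>sym_group n\<^esub> i \<otimes>\<^bsub>sym_group n\<^esub> s
                                          \<otimes>\<^bsub>sym_group n\<^esub> inv\<^bsub>sym_group n\<^esub> (g [^]\<^bsub>sym_group n\<^esub> i)) ` S)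
                in digraph_iso (carrier (sym_group n))
                      (twisted_cayley (sym_group n) (carrier (sym_group n)) S' (inner (sym_group n) sa))
                      (carrier (sym_group n))
                      (twisted_cayley (sym_group n) (carrier (sym_group n)) S' (inner (sym_group n) ta))
                 \<and> digraph_iso (carrier (sym_group n))
                      (twisted_cayley_sum (sym_group n) (carrier (sym_group n)) S' (inner (sym_group n) sa))
                      (carrier (sym_group n))
                      (twisted_cayley_sum (sym_group n) (carrier (sym_group n)) S' (inner (sym_group n) ta))))"
proof (rule conjI; intro allI impI)
  fix M :: "('a, 'b) monoid_scheme" and G S sa ta g
  assume a: "group M \<and> subgroup G M \<and> finite G \<and> S \<subseteq> G \<and> sa \<in> G \<and> ta \<in> G \<and>
            g \<in> carrier M \<and> g \<otimes>\<^bsub>M\<^esub> sa \<otimes>\<^bsub>M\<^esub> inv\<^bsub>M\<^esub> g = ta \<and>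
            (\<lambda>s. g \<otimes>\<^bsub>M\<^esub> s \<otimes>\<^bsub>M\<^esub> inv\<^bsub>M\<^esub> g) ` S = S \<and>
            (\<lambda>x. g \<otimes>\<^bsub>M\<^esub> x \<otimes>\<^bsub>M\<^esub> inv\<^bsub>M\<^esub> g) ` G = G"
  then show "digraph_iso G (twisted_cayley M G S (inner M sa)) G (twisted_cayley M G S (inner M ta))
       \<and> digraph_iso G (twisted_cayley_sum M G S (inner M sa)) G (twisted_cayley_sum M G S (inner M ta))"
    using group.part1[of M G S sa g ta] a by blast
next
  fix n :: nat and sa ta :: "nat \<Rightarrow> nat" and S
  assume a: "sa \<in> carrier (sym_group n) \<and> ta \<in> carrier (sym_group n) \<and>
            (\<exists>h \<in> carrier (sym_group n).
               h \<otimes>\<^bsub>sym_group n\<^esub> sa \<otimes>\<^bsub>sym_group n\<^esub> inv\<^bsub>sym_group n\<^esub> h = ta) \<and>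
            S \<subseteq> carrier (sym_group n)"
  then obtain h where h: "h \<in> carrier (sym_group n)"
    "h \<otimes>\<^bsub>sym_group n\<^esub> sa \<otimes>\<^bsub>sym_group n\<^esub> inv\<^bsub>sym_group n\<^esub> h = ta" by blast
  interpret group "sym_group n" by (rule sym_group_is_group)
  have S: "S \<subseteq> carrier (sym_group n)" using a by blast
  note oc = orbit_closed[OF h(1) S]
  show "\<exists>g \<in> carrier (sym_group n).
                let S' = (\<Union>i :: int. (\<lambda>s. g [^]\<^bsub>sym_group n\<^esub> i \<otimes>\<^bsub>sym_group n\<^esub> s
                                          \<otimes>\<^bsub>sym_group n\<^esub> inv\<^bsub>sym_group n\<^esub> (g [^]\<^bsub>sym_group n\<^esub> i)) ` S)
                in digraph_iso (carrier (sym_group n))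
                      (twisted_cayley (sym_group n) (carrier (sym_group n)) S' (inner (sym_group n) sa))
                      (carrier (sym_group n))
                      (twisted_cayley (sym_group n) (carrier (sym_group n)) S' (inner (sym_group n) ta))
                 \<and> digraph_iso (carrier (sym_group n))
                      (twisted_cayley_sum (sym_group n) (carrier (sym_group n)) S' (inner (sym_group n) sa))
                      (carrier (sym_group n))
                      (twisted_cayley_sum (sym_group n) (carrier (sym_group n)) S' (inner (sym_group n) ta))"
    unfolding Let_def
  proof (rule bexI[OF _ h(1)], rule group.part1[OF sym_group_is_group subgroup_self oc(1) _ h])
    show "sa \<in> carrier (sym_group n)" using a by blast
    show "(\<lambda>x. h \<otimes>\<^bsub>sym_group n\<^esub> x \<otimes>\<^bsub>sym_group n\<^esub> inv\<^bsub>sym_group n\<^esub> h) ` carrier (sym_group n) = carrier (sym_group n)"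
    proof
      show "(\<lambda>x. h \<otimes>\<^bsub>sym_group n\<^esub> x \<otimes>\<^bsub>sym_group n\<^esub> inv\<^bsub>sym_group n\<^esub> h) ` carrier (sym_group n) \<subseteq> carrier (sym_group n)"
        using h(1) by (blast intro: m_closed inv_closed)
      show "carrier (sym_group n) \<subseteq> (\<lambda>x. h \<otimes>\<^bsub>sym_group n\<^esub> x \<otimes>\<^bsub>sym_group n\<^esub> inv\<^bsub>sym_group n\<^esub> h) ` carrier (sym_group n)"
      proof
        fix y assume y: "y \<in> carrier (sym_group n)"
        have "y = h \<otimes>\<^bsub>sym_group n\<^esub> (inv\<^bsub>sym_group n\<^esub> h \<otimes>\<^bsub>sym_group n\<^esub> y \<otimes>\<^bsub>sym_group n\<^esub> h) \<otimes>\<^bsub>sym_group n\<^esub> inv\<^bsub>sym_group n\<^esub> h"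
          using y h(1) by (simp add: m_assoc del: sym_group_inv_equality)
        moreover have "inv\<^bsub>sym_group n\<^esub> h \<otimes>\<^bsub>sym_group n\<^esub> y \<otimes>\<^bsub>sym_group n\<^esub> h \<in> carrier (sym_group n)"
          using y h(1) by (simp del: sym_group_inv_equality)
        ultimately show "y \<in> (\<lambda>x. h \<otimes>\<^bsub>sym_group n\<^esub> x \<otimes>\<^bsub>sym_group n\<^esub> inv\<^bsub>sym_group n\<^esub> h) ` carrier (sym_group n)"
          by blast
      qed
    qed
  qed (rule oc(2))
qed

end
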